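(* Let $\mathbf A$ be a pseudo-Kleene lattice. Then $\mathbf A$ is super-paraorthomodular if and only if, for all $x,y\in A$ with $x\leq y$, the elements $\pi_{0_{x,y}}(x)$ and $\pi_{0_{x,y}}(y)$ generate a Boolean subalgebra of $\mathbf{Local}(x,y)$.
   Context: A pseudo-Kleene lattice is an algebra $(A,\land,\lor,{}',0,1)$ that is a bounded lattice with an antitone involution ${}'$ ($x\leq y\Rightarrow y'\leq x'$, $x''=x$) satisfying $x\land x'\leq y\lor y'$. It is super-paraorthomodular if for all $x,y$: (SP1) $x\leq y$ and $x'\land y=(x\land x')\lor(y\land y')$ imply $y\land(x\lor x')=x\lor(y\land y')$; (SP2) $x\leq y$ implies $(x\land x')\lor(y\land y')=(x'\land y)\land(x'\land y)'$. For $x,y\in A$: $0_{x,y}=(x\land x')\lor(y\land y')$, $1_{x,y}=(x\lor x')\land(y\lor y')$, and $\pi_z(w)=(w\land(z\lor z'))\lor(z\land z')$. $\mathbf{Local}(x,y)$ is the pseudo-Kleene lattice on the interval $[0_{x,y},1_{x,y}]$ with $\land,\lor,{}'$ inherited from $\mathbf A$ and bounds $0_{x,y},1_{x,y}$. A Boolean subalgebra of $\mathbf{Local}(x,y)$ is a subalgebra (closed under $\land,\lor,{}'$, containing $0_{x,y},1_{x,y}$) that is a distributive lattice in which $u\land u'=0_{x,y}$ for all its elements $u$. *)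

theory Defs
  imports Main
begin

definition pseudo_kleene :: "('a::bounded_lattice \<Rightarrow> 'a) \<Rightarrow> bool" where
  "pseudo_kleene c \<longleftrightarrow>
     (\<forall>x y. x \<le> y \<longrightarrow> c y \<le> c x) \<and>
     (\<forall>x. c (c x) = x) \<and>
     (\<forall>x y. inf x (c x) \<le> sup y (c y))"

definition zero_xy :: "('a::bounded_lattice \<Rightarrow> 'a) \<Rightarrow> 'a \<Rightarrow> 'a \<Rightarrow> 'a" where
  "zero_xy c x y = sup (inf x (c x)) (inf y (c y))"

definition one_xy :: "('a::bounded_lattice \<Rightarrow> 'a) \<Rightarrow> 'a \<Rightarrow> 'a \<Rightarrow> 'a" where
  "one_xy c x y = inf (sup x (c x)) (sup y (c y))"

definition proj :: "('a::bounded_lattice \<Rightarrow> 'a) \<Rightarrow> 'a \<Rightarrow> 'a \<Rightarrow> 'a" where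
  "proj c z w = sup (inf w (sup z (c z))) (inf z (c z))"

definition super_paraorthomodular :: "('a::bounded_lattice \<Rightarrow> 'a) \<Rightarrow> bool" where
  "super_paraorthomodular c \<longleftrightarrow>
     (\<forall>x y. x \<le> y \<and> inf (c x) y = sup (inf x (c x)) (inf y (c y)) \<longrightarrow>
        inf y (sup x (c x)) = sup x (inf y (c y))) \<and>
     (\<forall>x y. x \<le> y \<longrightarrow>
        sup (inf x (c x)) (inf y (c y)) = inf (inf (c x) y) (c (inf (c x) y)))"

definition local_carrier :: "('a::bounded_lattice \<Rightarrow> 'a) \<Rightarrow> 'a \<Rightarrow> 'a \<Rightarrow> 'a set" where
  "local_carrier c x y = {u. zero_xy c x y \<le> u \<and> u \<le> one_xy c x y}"

inductive_set local_gen :: "('a::bounded_lattice \<Rightarrow> 'a) \<Rightarrow> 'a \<Rightarrow> 'a \<Rightarrow> 'a set \<Rightarrow> 'a set"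
  for c :: "'a \<Rightarrow> 'a" and x y :: 'a and G :: "'a set" where
  gen: "g \<in> G \<Longrightarrow> g \<in> local_gen c x y G"
| bot: "zero_xy c x y \<in> local_gen c x y G"
| top: "one_xy c x y \<in> local_gen c x y G"
| inf: "u \<in> local_gen c x y G \<Longrightarrow> v \<in> local_gen c x y G \<Longrightarrow> inf u v \<in> local_gen c x y G"
| sup: "u \<in> local_gen c x y G \<Longrightarrow> v \<in> local_gen c x y G \<Longrightarrow> sup u v \<in> local_gen c x y G"
| cmp: "u \<in> local_gen c x y G \<Longrightarrow> c u \<in> local_gen c x y G"

definition boolean_local_sub :: "('a::bounded_lattice \<Rightarrow> 'a) \<Rightarrow> 'a \<Rightarrow> 'a \<Rightarrow> 'a set \<Rightarrow> bool" where
  "boolean_local_sub c x y S \<longleftrightarrow>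
     S \<subseteq> local_carrier c x y \<and>
     zero_xy c x y \<in> S \<and> one_xy c x y \<in> S \<and>
     (\<forall>u\<in>S. \<forall>v\<in>S. inf u v \<in> S \<and> sup u v \<in> S) \<and> (\<forall>u\<in>S. c u \<in> S) \<and>
     (\<forall>u\<in>S. \<forall>v\<in>S. \<forall>w\<in>S. inf u (sup v w) = sup (inf u v) (inf u w)) \<and>
     (\<forall>u\<in>S. inf u (c u) = zero_xy c x y)"

end

theory Submission imports Defs begin

context fixes c :: "'a::bounded_lattice \<Rightarrow> 'a" assumes pk: "pseudo_kleene c"
begin
lemma anti: "x \<le> y \<Longrightarrow> c y \<le> c x" using pk unfolding pseudo_kleene_def by blast
lemma inv[simp]: "c (c x) = x" using pk unfolding pseudo_kleene_def by blast
lemma kl: "inf x (c x) \<le> sup y (c y)" using pk unfolding pseudo_kleene_def by blast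
lemma le_iff: "c u \<le> c v \<longleftrightarrow> v \<le> u" by (metis anti inv)
lemma dm1[simp]: "c (sup u v) = inf (c u) (c v)"
proof (rule antisym)
  show "c (sup u v) \<le> inf (c u) (c v)" by (simp add: anti)
  have "sup u v \<le> c (inf (c u) (c v))" by (metis anti inv inf_le1 inf_le2 le_sup_iff)
  then show "inf (c u) (c v) \<le> c (sup u v)" by (metis anti inv)
qed
lemma dm2[simp]: "c (inf u v) = sup (c u) (c v)" by (metis dm1 inv)

definition tv :: "'a \<Rightarrow> 'a \<Rightarrow> 'a \<Rightarrow> 'a \<Rightarrow> bool \<Rightarrow> bool \<Rightarrow> bool \<Rightarrow> 'a" where
"tv z e p q A B C = (if A then (if B then (if C then e else q) else (if C then sup p (c q) else p))
   else (if B then (if C then c p else inf q (c p)) else (if C then c q else z)))"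

lemma tv_hom:
  assumes "z \<le> p" "p \<le> q" "q \<le> e" "c z = e"
    "inf p (c p) = z" "inf q (c q) = z" "sup p (inf q (c p)) = q" "sup (c q) (inf q (c p)) = c p"
  shows "inf (tv z e p q A B C) (tv z e p q A' B' C') = tv z e p q (A\<and>A') (B\<and>B') (C\<and>C')"
    and "c (tv z e p q A B C) = tv z e p q (\<not>A) (\<not>B) (\<not>C)"
proof -
  have ce: "c e = z" using assms(4) inv by metis
  have cq: "c q \<le> c p" "c p \<le> c z" "c e \<le> c q" using assms(1-3) anti by auto
  have m1: "inf q (sup p (c q)) = p"
  proof -
    have "c (sup (c q) (inf q (c p))) = c (c p)" using assms(8) by simp
    then show ?thesis by (simp add: sup_commute)
  qed
  have m2: "inf (c p) (sup p (c q)) = c q"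
  proof -
    have "c (sup p (inf q (c p))) = c q" using assms(7) by simp
    then show ?thesis by (simp add: sup_commute)
  qed
  have zq: "z \<le> q" using assms by simp
  have le: "z \<le> c q" "z \<le> c p" "z \<le> q" "z \<le> inf q (c p)" "z \<le> sup p (c q)"
     "p \<le> e" "c p \<le> e" "c q \<le> e" "inf q (c p) \<le> e" "sup p (c q) \<le> e"
     "p \<le> sup p (c q)" "c q \<le> sup p (c q)" "inf q (c p) \<le> q" "inf q (c p) \<le> c p"
    using assms(1-4) cq ce zq by (auto intro: order_trans le_supI1 le_supI2 le_infI1)
  have m3: "inf p (c q) = z"
  proof (rule antisym)
    have "inf p (c q) \<le> inf q (c q)" using assms(2) inf_mono by blast
    then show "inf p (c q) \<le> z" using assms(6) by simp
    show "z \<le> inf p (c q)" using le assms(1) by simp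
  qed
  have m4: "inf p (inf q (c p)) = z"
  proof (rule antisym)
    have "inf p (inf q (c p)) \<le> inf p (c p)" by (simp add: le_infI2)
    then show "inf p (inf q (c p)) \<le> z" using assms(5) by simp
    show "z \<le> inf p (inf q (c p))" using le assms(1) by simp
  qed
  have m5: "inf (inf q (c p)) (c q) = z"
  proof (rule antisym)
    have "inf (inf q (c p)) (c q) \<le> inf q (c q)" by (simp add: le_infI1)
    then show "inf (inf q (c p)) (c q) \<le> z" using assms(6) by simp
    show "z \<le> inf (inf q (c p)) (c q)" using le by simp
  qed
  have m6: "inf (inf q (c p)) (sup p (c q)) = z"
  proof -
    have "inf (inf q (c p)) (sup p (c q)) = inf q (inf (c p) (sup p (c q)))" by (simp add: inf.assoc)
    also have "\<dots> = inf q (c q)" using m2 by simp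
    finally show ?thesis using assms(6) by simp
  qed
  have ze: "z \<le> e" using zq assms(3) by simp
  have cm: "inf (c p) q = inf q (c p)" by (rule inf_commute)
  note facts = assms(5-6) m1 m2 m3 m4 m5 m6
  note facts2 = facts facts[THEN trans[OF inf_commute]]
  show "inf (tv z e p q A B C) (tv z e p q A' B' C') = tv z e p q (A\<and>A') (B\<and>B') (C\<and>C')"
    unfolding tv_def
    by (cases A; cases B; cases C; cases A'; cases B'; cases C'; simp add: inf_absorb1 inf_absorb2 facts2 le cq assms(1-3) ce ze cm)
  show "c (tv z e p q A B C) = tv z e p q (\<not>A) (\<not>B) (\<not>C)"
    unfolding tv_def by (cases A; cases B; cases C; simp add: ce assms(4) cm sup_commute)
qed

lemma tv_cong: "A = A' \<Longrightarrow> B = B' \<Longrightarrow> C = C' \<Longrightarrow> tv z e p q A B C = tv z e p q A' B' C'" by simp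

lemma c_zero: "c (zero_xy c x y) = one_xy c x y"
  unfolding zero_xy_def one_xy_def by (simp add: sup_commute)

lemma zero_le_one: "zero_xy c x y \<le> one_xy c x y"
  unfolding zero_xy_def one_xy_def using kl by simp

lemma c_one: "c (one_xy c x y) = zero_xy c x y" by (metis c_zero inv)

lemma proj_eq: "proj c (zero_xy c x y) w = sup (inf w (one_xy c x y)) (zero_xy c x y)"
  unfolding proj_def c_zero using zero_le_one
  by (simp add: sup_absorb2 inf_absorb1)

lemma px: "x \<le> y \<Longrightarrow> proj c (zero_xy c x y) x = sup x (inf y (c y))"
proof -
  assume xy: "x \<le> y"
  have "x \<le> sup y (c y)" using xy le_supI1 by blast
  then have 1: "inf x (one_xy c x y) = x" unfolding one_xy_def by (simp add: inf_absorb1)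
  have "sup x (sup (inf x (c x)) (inf y (c y))) = sup (sup x (inf x (c x))) (inf y (c y))" by (rule sup_assoc[symmetric])
  also have "\<dots> = sup x (inf y (c y))" by (simp add: sup_absorb1)
  finally show ?thesis unfolding proj_eq 1 unfolding zero_xy_def .
qed

lemma py: "x \<le> y \<Longrightarrow> proj c (zero_xy c x y) y = inf y (sup x (c x))"
proof -
  assume xy: "x \<le> y"
  have a: "inf x (c x) \<le> inf y (sup x (c x))" using xy by (simp add: le_infI1 le_supI1)
  have b: "inf y (c y) \<le> inf y (sup x (c x))" using kl by (simp add: le_infI1)
  have "inf y (one_xy c x y) = inf y (sup x (c x))"
  proof -
    have "inf y (sup y (c y)) = y" by simp
    then show ?thesis unfolding one_xy_def by (metis inf.assoc inf.commute)
  qed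
  then show ?thesis unfolding proj_eq unfolding zero_xy_def using a b by (simp add: sup_absorb1)
qed


lemma interval_c: "zero_xy c x y \<le> u \<Longrightarrow> u \<le> one_xy c x y \<Longrightarrow> zero_xy c x y \<le> c u \<and> c u \<le> one_xy c x y"
  by (metis anti c_one c_zero)

lemma PQ_basic:
  assumes xy: "x \<le> y"
  shows "zero_xy c x y \<le> sup x (inf y (c y))" "sup x (inf y (c y)) \<le> inf y (sup x (c x))"
    "inf y (sup x (c x)) \<le> one_xy c x y"
    "sup x (inf y (c y)) \<le> y" "inf y (sup x (c x)) \<le> y"
    "sup x (inf y (c y)) \<le> sup x (c y)"
    "c (sup x (inf y (c y))) \<le> c x" "c (inf y (sup x (c x))) \<le> c x"
    "c (inf y (sup x (c x))) \<le> sup x (c y)"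
proof -
  have cyx: "c y \<le> c x" using xy anti by blast
  have k: "inf y (c y) \<le> sup x (c x)" by (rule kl)
  show "zero_xy c x y \<le> sup x (inf y (c y))" unfolding zero_xy_def by (simp add: le_supI1)
  show "sup x (inf y (c y)) \<le> inf y (sup x (c x))" using xy k by (simp add: le_infI1)
  show "inf y (sup x (c x)) \<le> one_xy c x y" unfolding one_xy_def by (simp add: le_infI1)
  show "sup x (inf y (c y)) \<le> y" using xy by (simp add: le_infI1)
  show "inf y (sup x (c x)) \<le> y" by simp
  show "sup x (inf y (c y)) \<le> sup x (c y)" by (simp add: le_supI2)
  show "c (sup x (inf y (c y))) \<le> c x" by simp
  show "c (inf y (sup x (c x))) \<le> c x" using cyx by (simp add: le_infI1)
  show "c (inf y (sup x (c x))) \<le> sup x (c y)" by (simp add: le_infI2)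
qed


lemma fwd:
  assumes sp: "super_paraorthomodular c" and xy: "x \<le> y"
  shows "boolean_local_sub c x y (local_gen c x y {proj c (zero_xy c x y) x, proj c (zero_xy c x y) y})"
proof -
  define zz where "zz = zero_xy c x y"
  define ii where "ii = one_xy c x y"
  define P where "P = sup x (inf y (c y))"
  define Q where "Q = inf y (sup x (c x))"
  define R where "R = inf Q (c P)"
  have sp1: "\<And>u v. u \<le> v \<Longrightarrow> inf (c u) v = sup (inf u (c u)) (inf v (c v)) \<Longrightarrow>
      inf v (sup u (c u)) = sup u (inf v (c v))" using sp unfolding super_paraorthomodular_def by blast
  have sp2: "zz = inf (inf (c x) y) (sup x (c y))"
    using sp xy unfolding super_paraorthomodular_def zz_def zero_xy_def by (simp add: sup_commute)
  have tb: "\<And>u. u \<le> c x \<Longrightarrow> u \<le> y \<Longrightarrow> u \<le> sup x (c y) \<Longrightarrow> u \<le> zz"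
    unfolding sp2 by simp
  have int: "\<And>u. zz \<le> u \<Longrightarrow> u \<le> ii \<Longrightarrow> zz \<le> c u \<and> c u \<le> ii"
    unfolding zz_def ii_def by (rule interval_c)
  note B = PQ_basic[OF xy, folded zz_def ii_def P_def Q_def]
  have ci: "c ii = zz" and cz: "c zz = ii" unfolding zz_def ii_def by (simp_all add: c_one c_zero)
  have zi: "zz \<le> ii" unfolding zz_def ii_def by (rule zero_le_one)
  have zP: "zz \<le> P" and PQ: "P \<le> Q" and Qi: "Q \<le> ii" using B by auto
  have Pi: "P \<le> ii" using PQ Qi by simp
  have zQ: "zz \<le> Q" using zP PQ by simp
  have zcP: "zz \<le> c P" and cPi: "c P \<le> ii" using int zP Pi by auto
  have zcQ: "zz \<le> c Q" and cQi: "c Q \<le> ii" using int zQ Qi by auto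
  have cPQ: "c Q \<le> c P" using PQ anti by blast
  have cQt: "c Q \<le> sup x (c y)" and Pt: "P \<le> sup x (c y)" using B by auto
  have cQPt: "sup (c Q) P \<le> sup x (c y)" using cQt Pt by simp
  have K1: "inf P (c P) = zz"
  proof (rule antisym)
    show "inf P (c P) \<le> zz" by (rule tb) (use B in \<open>auto intro: le_infI1 le_infI2\<close>)
    show "zz \<le> inf P (c P)" using zP zcP by simp
  qed
  have K2: "inf Q (c Q) = zz"
  proof (rule antisym)
    show "inf Q (c Q) \<le> zz" by (rule tb) (use B in \<open>auto intro: le_infI1 le_infI2\<close>)
    show "zz \<le> inf Q (c Q)" using zQ zcQ by simp
  qed
  have K3: "sup P R = Q"
  proof -
    define w where "w = sup P R"
    have wQ: "w \<le> Q" unfolding w_def R_def using PQ by simp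
    have zw: "zz \<le> w" unfolding w_def using zP by (simp add: le_supI1)
    have wi: "w \<le> ii" using wQ Qi by simp
    have zcw: "zz \<le> c w" using int zw wi by auto
    have cw: "c w = inf (c P) (sup (c Q) P)" unfolding w_def R_def by simp
    have h1: "inf (c w) Q = zz"
    proof (rule antisym)
      have aux: "inf (inf (c P) (sup (c Q) P)) Q \<le> sup x (c y)" by (meson cQPt inf_le1 inf_le2 order_trans)
      show "inf (c w) Q \<le> zz" unfolding cw
        by (rule tb) (use B aux in \<open>auto intro: le_infI1 le_infI2\<close>)
      show "zz \<le> inf (c w) Q" using zcw zQ by simp
    qed
    have h2: "inf w (c w) = zz"
    proof (rule antisym)
      have "inf w (c w) \<le> inf Q (inf (c P) (sup (c Q) P))" unfolding cw[symmetric] by (rule inf_mono[OF wQ order_refl])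
      moreover have "inf Q (inf (c P) (sup (c Q) P)) \<le> zz"
      proof (rule tb)
        show "inf Q (inf (c P) (sup (c Q) P)) \<le> c x" using B by (meson inf_le1 inf_le2 order_trans)
        show "inf Q (inf (c P) (sup (c Q) P)) \<le> y" using B by (meson inf_le1 order_trans)
        show "inf Q (inf (c P) (sup (c Q) P)) \<le> sup x (c y)" using cQPt by (meson inf_le2 order_trans)
      qed
      ultimately show "inf w (c w) \<le> zz" by (rule order_trans)
      show "zz \<le> inf w (c w)" using zcw zw by simp
    qed
    have "inf Q (sup w (c w)) = sup w (inf Q (c Q))"
      using sp1[OF wQ] h1 h2 K2 by simp
    moreover have "sup w (c w) = ii"
    proof -
      have "c (inf w (c w)) = c zz" using h2 by simp
      then show ?thesis using cz by (simp add: sup_commute)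
    qed
    ultimately have "Q = w" using K2 Qi zw by (simp add: inf_absorb1 sup_absorb1)
    then show ?thesis unfolding w_def by simp
  qed
  have K4: "sup (c Q) R = c P"
  proof -
    define w where "w = sup (c Q) R"
    have wP: "w \<le> c P" unfolding w_def R_def using cPQ by simp
    have zw: "zz \<le> w" unfolding w_def using zcQ by (simp add: le_supI1)
    have wi: "w \<le> ii" using wP cPi by simp
    have zcw: "zz \<le> c w" using int zw wi by auto
    have cw: "c w = inf Q (sup (c Q) P)" unfolding w_def R_def by simp
    have h1: "inf (c w) (c P) = zz"
    proof (rule antisym)
      have aux: "inf (inf Q (sup (c Q) P)) (c P) \<le> sup x (c y)" by (meson cQPt inf_le1 inf_le2 order_trans)
      show "inf (c w) (c P) \<le> zz" unfolding cw
        by (rule tb) (use B aux in \<open>auto intro: le_infI1 le_infI2\<close>)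
      show "zz \<le> inf (c w) (c P)" using zcw zcP by simp
    qed
    have h2: "inf w (c w) = zz"
    proof (rule antisym)
      have "inf w (c w) \<le> inf (c P) (inf Q (sup (c Q) P))" unfolding cw[symmetric] by (rule inf_mono[OF wP order_refl])
      moreover have "inf (c P) (inf Q (sup (c Q) P)) \<le> zz"
      proof (rule tb)
        show "inf (c P) (inf Q (sup (c Q) P)) \<le> c x" using B by (meson inf_le1 order_trans)
        show "inf (c P) (inf Q (sup (c Q) P)) \<le> y" using B by (meson inf_le1 inf_le2 order_trans)
        show "inf (c P) (inf Q (sup (c Q) P)) \<le> sup x (c y)" using cQPt by (meson inf_le2 order_trans)
      qed
      ultimately show "inf w (c w) \<le> zz" by (rule order_trans)
      show "zz \<le> inf w (c w)" using zcw zw by simp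
    qed
    have K1': "inf (c P) (c (c P)) = zz" using K1 by (simp add: inf_commute)
    have "inf (c P) (sup w (c w)) = sup w (inf (c P) (c (c P)))"
      using sp1[OF wP] h1 h2 K1' by simp
    moreover have "sup w (c w) = ii"
    proof -
      have "c (inf w (c w)) = c zz" using h2 by simp
      then show ?thesis using cz by (simp add: sup_commute)
    qed
    ultimately have "c P = w" using K1' cPi zw by (simp add: inf_absorb1 sup_absorb1)
    then show ?thesis unfolding w_def by simp
  qed
  note H = tv_hom[OF zP PQ Qi cz K1 K2 K3[unfolded R_def] K4[unfolded R_def]]
  have Hs: "sup (tv zz ii P Q A B C) (tv zz ii P Q A' B' C') = tv zz ii P Q (A\<or>A') (B\<or>B') (C\<or>C')"
    for A B C A' B' C'
  proof -
    have "sup (tv zz ii P Q A B C) (tv zz ii P Q A' B' C') =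
       c (inf (c (tv zz ii P Q A B C)) (c (tv zz ii P Q A' B' C')))" by simp
    also have "\<dots> = tv zz ii P Q (A\<or>A') (B\<or>B') (C\<or>C')" unfolding H by simp
    finally show ?thesis .
  qed
  define T where "T = {u. \<exists>A B C. u = tv zz ii P Q A B C}"
  have px': "proj c (zero_xy c x y) x = P" unfolding P_def by (rule px[OF xy])
  have py': "proj c (zero_xy c x y) y = Q" unfolding Q_def by (rule py[OF xy])
  let ?S = "local_gen c x y {proj c (zero_xy c x y) x, proj c (zero_xy c x y) y}"
  have ST: "u \<in> T" if "u \<in> ?S" for u
    using that
  proof (induction rule: local_gen.induct)
    case (gen g)
    have "P = tv zz ii P Q True False False" "Q = tv zz ii P Q True True False" by (simp_all add: tv_def)
    then show ?case using gen unfolding T_def px' py' by blast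
  next
    case bot
    have "zz = tv zz ii P Q False False False" by (simp add: tv_def)
    then show ?case unfolding T_def zz_def by blast
  next
    case top
    have "ii = tv zz ii P Q True True True" by (simp add: tv_def)
    then show ?case unfolding T_def ii_def by blast
  next
    case (inf u v)
    then show ?case unfolding T_def using H(1) by blast
  next
    case (sup u v)
    then show ?case unfolding T_def using Hs by blast
  next
    case (cmp u)
    then show ?case unfolding T_def using H(2) by blast
  qed
  have Tcar: "u \<in> local_carrier c x y" if "u \<in> T" for u
  proof -
    obtain A B C where u: "u = tv zz ii P Q A B C" using \<open>u \<in> T\<close> unfolding T_def by blast
    have "zz \<le> u \<and> u \<le> ii" unfolding u tv_def
      using zP Pi zQ Qi zcP cPi zcQ cQi zi by (auto intro: le_infI1 le_supI1)
    then show ?thesis unfolding local_carrier_def zz_def ii_def by simp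
  qed
  show ?thesis unfolding boolean_local_sub_def
  proof (intro conjI ballI)
    show "?S \<subseteq> local_carrier c x y" using ST Tcar by blast
    show "zero_xy c x y \<in> ?S" by (rule local_gen.bot)
    show "one_xy c x y \<in> ?S" by (rule local_gen.top)
    show "inf u v \<in> ?S" if "u \<in> ?S" "v \<in> ?S" for u v using that by (rule local_gen.inf)
    show "sup u v \<in> ?S" if "u \<in> ?S" "v \<in> ?S" for u v using that by (rule local_gen.sup)
    show "c u \<in> ?S" if "u \<in> ?S" for u using that by (rule local_gen.cmp)
  next
    fix u v w assume "u \<in> ?S" "v \<in> ?S" "w \<in> ?S"
    then have "u \<in> T" "v \<in> T" "w \<in> T" using ST by auto
    then obtain A B C A1 B1 C1 A2 B2 C2 where u: "u = tv zz ii P Q A B C"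
      and v: "v = tv zz ii P Q A1 B1 C1" and w: "w = tv zz ii P Q A2 B2 C2"
      unfolding T_def by auto
    show "inf u (sup v w) = sup (inf u v) (inf u w)" unfolding u v w H(1) Hs
      by (rule tv_cong) auto
  next
    fix u assume "u \<in> ?S"
    then have "u \<in> T" using ST by auto
    then obtain A B C where u: "u = tv zz ii P Q A B C" unfolding T_def by auto
    show "inf u (c u) = zero_xy c x y" unfolding u H by (simp add: tv_def zz_def)
  qed
qed


lemma bwd:
  assumes H: "\<forall>x y. x \<le> y \<longrightarrow> boolean_local_sub c x y
         (local_gen c x y {proj c (zero_xy c x y) x, proj c (zero_xy c x y) y})"
  shows "super_paraorthomodular c"
proof -
  have main: "(inf (c x) y = zero_xy c x y \<longrightarrow> inf y (sup x (c x)) = sup x (inf y (c y))) \<and>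
     zero_xy c x y = inf (inf (c x) y) (c (inf (c x) y))" if xy: "x \<le> y" for x y
  proof -
    define zz where "zz = zero_xy c x y"
    define ii where "ii = one_xy c x y"
    define P where "P = sup x (inf y (c y))"
    define Q where "Q = inf y (sup x (c x))"
    define R where "R = inf Q (c P)"
    let ?S = "local_gen c x y {proj c (zero_xy c x y) x, proj c (zero_xy c x y) y}"
    have bs: "boolean_local_sub c x y ?S" using H xy by blast
    have car: "?S \<subseteq> local_carrier c x y"
      and dist: "\<And>u v w. u \<in> ?S \<Longrightarrow> v \<in> ?S \<Longrightarrow> w \<in> ?S \<Longrightarrow> inf u (sup v w) = sup (inf u v) (inf u w)"
      and cmpl: "\<And>u. u \<in> ?S \<Longrightarrow> inf u (c u) = zz"
      using bs unfolding boolean_local_sub_def zz_def by blast+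
    note B = PQ_basic[OF xy, folded zz_def ii_def P_def Q_def]
    have cz: "c zz = ii" unfolding zz_def ii_def by (simp add: c_zero)
    have PS: "P \<in> ?S" unfolding P_def px[OF xy, symmetric] by (rule local_gen.gen) simp
    have QS: "Q \<in> ?S" unfolding Q_def py[OF xy, symmetric] by (rule local_gen.gen) simp
    have cPS: "c P \<in> ?S" using PS by (rule local_gen.cmp)
    have RS: "R \<in> ?S" unfolding R_def using QS cPS by (rule local_gen.inf)
    have cRS: "c R \<in> ?S" using RS by (rule local_gen.cmp)
    have inS: "zz \<le> u \<and> u \<le> ii" if "u \<in> ?S" for u
      using car that unfolding local_carrier_def zz_def ii_def by blast
    have part1: "inf y (sup x (c x)) = sup x (inf y (c y))" if hyp: "inf (c x) y = zz"
    proof -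
      have "R \<le> inf (c x) y" unfolding R_def using B by (simp add: le_infI1 le_infI2)
      then have R0: "R = zz" using inS[OF RS] hyp by (simp add: antisym)
      have K: "inf P (c P) = zz" by (rule cmpl[OF PS])
      have "c (inf P (c P)) = c zz" using K by simp
      then have J: "sup P (c P) = ii" using cz by (simp add: sup_commute)
      have "inf Q (sup P (c P)) = sup (inf Q P) (inf Q (c P))" by (rule dist[OF QS PS cPS])
      also have "\<dots> = P" using B R0 inS[OF PS] unfolding R_def by (simp add: inf_absorb2 sup_absorb1)
      finally have "Q = P" using J inS[OF QS] by (simp add: inf_absorb1)
      then show ?thesis unfolding P_def Q_def .
    qed
    have part2: "zz = inf (inf (c x) y) (sup x (c y))"
    proof (rule antisym)
      have cyx: "c y \<le> c x" using xy anti by blast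
      show "zz \<le> inf (inf (c x) y) (sup x (c y))" unfolding zz_def zero_xy_def
        using xy cyx by (auto intro: le_infI1 le_infI2 le_supI1 le_supI2 order_trans)
      define t where "t = inf (inf (c x) y) (sup x (c y))"
      have "t \<le> Q" unfolding t_def Q_def using cyx
        by (meson inf_le1 inf_le2 le_inf_iff order_trans sup_mono order_refl)
      moreover have "t \<le> c P" unfolding t_def P_def
        by (simp add: le_infI1 le_infI2 le_supI2)
      ultimately have tR: "t \<le> R" unfolding R_def by simp
      have "t \<le> c R" unfolding t_def R_def P_def Q_def
        by (simp add: le_infI2 le_supI1 le_supI2 sup_mono)
      then have "t \<le> inf R (c R)" using tR by simp
      then show "inf (inf (c x) y) (sup x (c y)) \<le> zz" using cmpl[OF RS] unfolding t_def by simp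
    qed
    show ?thesis using part1 part2 unfolding zz_def by simp
  qed
  show ?thesis unfolding super_paraorthomodular_def
    using main[unfolded zero_xy_def] by (metis (no_types, lifting))
qed

end

theorem lemma4p8:
  fixes c :: "'a::bounded_lattice \<Rightarrow> 'a"
  assumes "pseudo_kleene c"
  shows "super_paraorthomodular c \<longleftrightarrow>
    (\<forall>x y. x \<le> y \<longrightarrow>
       boolean_local_sub c x y
         (local_gen c x y {proj c (zero_xy c x y) x, proj c (zero_xy c x y) y}))"
  using fwd[OF assms] bwd[OF assms] by blast

end
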